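(* Let $n\ge 2$. Then $n$ is prime if and only if the only rank-$2$ matroid on the ground set $\mathbb{Z}_n$ whose set of bases is invariant under the translation action of $\mathbb{Z}_n$ is the uniform matroid $U_{2,n}$; equivalently, iff $\mathbb{B}[\mathbb{Z}_n]$ has exactly one two-dimensional tropical subrepresentation, the one corresponding to $U_{2,n}$.
   Context: $\mathbb{Z}_n$ acts on $\binom{\mathbb{Z}_n}{2}$ by $g\cdot\{a,b\}=\{g+a,g+b\}$. Two-dimensional tropical subrepresentations of the boolean regular representation $\mathbb{B}[\mathbb{Z}_n]$ are equivalent to rank-$2$ matroids on ground set $\mathbb{Z}_n$ with basis set invariant under this action. *)

theory Defs
  imports "HOL-Computational_Algebra.Primes"
begin

text \<open>Z_n is modelled by the carrier {0..<n} of natural numbers with addition mod n.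
A matroid on a ground set E is given by its family of bases (basis axioms).\<close>

definition matroid_bases :: "'a set \<Rightarrow> 'a set set \<Rightarrow> bool" where
  "matroid_bases E \<B> \<longleftrightarrow>
     \<B> \<noteq> {} \<and> (\<forall>B\<in>\<B>. B \<subseteq> E) \<and>
     (\<forall>B1\<in>\<B>. \<forall>B2\<in>\<B>. \<forall>x\<in>B1 - B2. \<exists>y\<in>B2 - B1. insert y (B1 - {x}) \<in> \<B>)"

definition rank2_matroid_bases :: "'a set \<Rightarrow> 'a set set \<Rightarrow> bool" where
  "rank2_matroid_bases E \<B> \<longleftrightarrow> matroid_bases E \<B> \<and> (\<forall>B\<in>\<B>. card B = 2)"

definition translate :: "nat \<Rightarrow> nat \<Rightarrow> nat set \<Rightarrow> nat set" where
  "translate n g B = (\<lambda>a. (g + a) mod n) ` B"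

definition translation_invariant :: "nat \<Rightarrow> nat set set \<Rightarrow> bool" where
  "translation_invariant n \<B> \<longleftrightarrow> (\<forall>g<n. \<forall>B\<in>\<B>. translate n g B \<in> \<B>)"

definition uniform_2 :: "nat \<Rightarrow> nat set set" where
  "uniform_2 n = {B. B \<subseteq> {0..<n} \<and> card B = 2}"

end

theory Submission
  imports Defs "HOL-Number_Theory.Cong"
begin

definition Cb :: "nat \<Rightarrow> nat \<Rightarrow> nat set set" where
  "Cb n p = {B. B \<subseteq> {0..<n} \<and> card B = 2 \<and> (\<forall>a\<in>B. \<forall>b\<in>B. a mod p = b mod p \<longrightarrow> a = b)}"

lemma Cb_ok:
  assumes "p dvd n" "2 \<le> p" "0 < n"
  shows "rank2_matroid_bases {0..<n} (Cb n p) \<and> translation_invariant n (Cb n p)"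
proof -
  have n: "p \<le> n" using assms by (simp add: dvd_imp_le)
  have ne: "{0,1} \<in> Cb n p" using assms n by (auto simp: Cb_def)
  have ex: "\<forall>B1\<in>Cb n p. \<forall>B2\<in>Cb n p. \<forall>x\<in>B1 - B2. \<exists>y\<in>B2 - B1. insert y (B1 - {x}) \<in> Cb n p"
  proof (intro ballI)
    fix B1 B2 x assume B1: "B1 \<in> Cb n p" and B2: "B2 \<in> Cb n p" and x: "x \<in> B1 - B2"
    have "card B1 = 2" using B1 by (simp add: Cb_def)
    then obtain a b where ab: "B1 = {a,b}" "a \<noteq> b" by (auto simp: card_2_iff)
    obtain z where z: "B1 - {x} = {z}" "z \<in> B1" "z \<noteq> x" using ab x by auto
    have "card B2 = 2" using B2 by (simp add: Cb_def)
    then obtain c d where cd: "B2 = {c,d}" "c \<noteq> d" by (auto simp: card_2_iff)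
    have cdm: "c mod p \<noteq> d mod p" using B2 cd unfolding Cb_def by blast
    obtain y where y: "y \<in> B2" "y mod p \<noteq> z mod p" 
    proof (cases "c mod p = z mod p")
      case True thus ?thesis using that[of d] cdm cd by auto
    next
      case False thus ?thesis using that[of c] cd by auto
    qed
    have "y \<noteq> x" using y x by auto
    moreover have "y \<noteq> z" using y by auto
    ultimately have yB: "y \<in> B2 - B1" using y ab z by auto
    have "insert y (B1 - {x}) = {y, z}" using z by simp
    moreover have "{y,z} \<in> Cb n p"
    proof -
      have s1: "B1 \<subseteq> {0..<n}" and s2: "B2 \<subseteq> {0..<n}" using B1 B2 by (simp_all add: Cb_def)
      have "y < n" using s2 y(1) by auto
      have "z < n" using s1 z(2) by auto
      have "card {y,z} = 2" using \<open>y \<noteq> z\<close> by simp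
      moreover have "{y,z} \<subseteq> {0..<n}" using \<open>y < n\<close> \<open>z < n\<close> by simp
      moreover have "\<forall>a\<in>{y,z}. \<forall>b\<in>{y,z}. a mod p = b mod p \<longrightarrow> a = b" using y(2) by auto
      ultimately show ?thesis unfolding Cb_def by blast
    qed
    ultimately show "\<exists>y\<in>B2 - B1. insert y (B1 - {x}) \<in> Cb n p" using yB by (metis)
  qed
  have r: "rank2_matroid_bases {0..<n} (Cb n p)"
  proof -
    have "\<forall>B\<in>Cb n p. B \<subseteq> {0..<n}" "\<forall>B\<in>Cb n p. card B = 2" by (auto simp: Cb_def)
    thus ?thesis using ne ex unfolding rank2_matroid_bases_def matroid_bases_def by blast
  qed
  have "translation_invariant n (Cb n p)"
    unfolding translation_invariant_def
  proof (intro allI impI ballI)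
    fix g B assume g: "g < n" and B: "B \<in> Cb n p"
    have md: "((g + a) mod n) mod p = (g + a) mod p" for a
      using assms(1) by (simp add: mod_mod_cancel)
    have cls: "a \<in> B \<Longrightarrow> b \<in> B \<Longrightarrow> ((g + a) mod n) mod p = ((g + b) mod n) mod p \<Longrightarrow> a = b" for a b
    proof -
      assume a: "a \<in> B" and b: "b \<in> B" and e: "((g + a) mod n) mod p = ((g + b) mod n) mod p"
      have "(g + a) mod p = (g + b) mod p" using e md by simp
      hence "a mod p = b mod p" using cong_add_lcancel_nat[of g a b p] by (simp add: cong_def)
      thus "a = b" using B a b by (auto simp: Cb_def)
    qed
    have inj: "inj_on (\<lambda>a. (g + a) mod n) B" using cls unfolding inj_on_def by metis
    have "card (translate n g B) = 2" using B inj by (simp add: translate_def card_image Cb_def)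
    moreover have "translate n g B \<subseteq> {0..<n}" using g by (auto simp: translate_def)
    moreover have "\<forall>a\<in>translate n g B. \<forall>b\<in>translate n g B. a mod p = b mod p \<longrightarrow> a = b"
      using cls unfolding translate_def by blast
    ultimately show "translate n g B \<in> Cb n p" by (simp add: Cb_def)
  qed
  with r show ?thesis by simp
qed


lemma uniform_Cb: "uniform_2 n = Cb n n"
proof -
  have "(\<forall>a\<in>B. \<forall>b\<in>B. a mod n = b mod n \<longrightarrow> a = b)" if "B \<subseteq> {0..<n}" for B
    using that by (auto simp: subset_iff)
  thus ?thesis unfolding uniform_2_def Cb_def by blast
qed

lemma tr_back:
  assumes "B \<subseteq> {0..<n}" "g \<le> n"
  shows "translate n ((n - g) mod n) (translate n g B) = B"
proof -
  have "((n - g) mod n + (g + a) mod n) mod n = a" if "a \<in> B" for a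
  proof -
    have "((n - g) mod n + (g + a) mod n) mod n = (n - g + (g + a)) mod n"
      by (simp add: mod_add_eq)
    also have "n - g + (g + a) = n + a" using assms(2) by simp
    also have "(n + a) mod n = a" using assms(1) that by auto
    finally show ?thesis .
  qed
  thus ?thesis unfolding translate_def image_image by simp
qed

lemma shift_iff:
  assumes inv: "translation_invariant n \<B>" and B: "B \<subseteq> {0..<n}" and g: "g < n"
  shows "translate n g B \<in> \<B> \<longleftrightarrow> B \<in> \<B>"
proof
  assume "B \<in> \<B>" thus "translate n g B \<in> \<B>" using inv g unfolding translation_invariant_def by blast
next
  assume "translate n g B \<in> \<B>"
  moreover have "(n - g) mod n < n" using g by simp
  ultimately have "translate n ((n - g) mod n) (translate n g B) \<in> \<B>"
    using inv unfolding translation_invariant_def by blast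
  thus "B \<in> \<B>" using tr_back[OF B] g by simp
qed

lemma tr_pair: "translate n g {a,b} = {(g+a) mod n, (g+b) mod n}"
  by (simp add: translate_def)

lemma nz_arith:
  fixes a b n :: nat
  assumes "a < n" "b < n" "a \<noteq> b"
  shows "((n - a) mod n + b) mod n \<noteq> 0"
proof -
  have e: "((n - a) mod n + b) mod n = (n - a + b) mod n" by (simp add: mod_add_left_eq)
  show ?thesis
  proof (cases "a < b")
    case True
    hence "n - a + b = (b - a) + n" using assms by simp
    hence "(n - a + b) mod n = ((b - a) + n) mod n" by simp
    also have "\<dots> = b - a" using assms by simp
    finally have "(n - a + b) mod n = b - a" .
    thus ?thesis using e True by simp
  next
    case False
    have "n - a + b < n" using False assms(1,3) by arith
    moreover have "0 < n - a + b" using assms(1) by arith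
    ultimately show ?thesis using e assms(1) by simp
  qed
qed

lemma prime_unique:
  assumes p: "prime n" and r: "rank2_matroid_bases {0..<n} \<B>" and inv: "translation_invariant n \<B>"
  shows "\<B> = uniform_2 n"
proof -
  have n2: "n \<ge> 2" using p by (simp add: prime_ge_2_nat)
  have sub: "\<And>B. B \<in> \<B> \<Longrightarrow> B \<subseteq> {0..<n} \<and> card B = 2"
    using r unfolding rank2_matroid_bases_def matroid_bases_def by blast
  have exch: "\<And>B1 B2 x. B1 \<in> \<B> \<Longrightarrow> B2 \<in> \<B> \<Longrightarrow> x \<in> B1 - B2 \<Longrightarrow> \<exists>y\<in>B2 - B1. insert y (B1 - {x}) \<in> \<B>"
    using r unfolding rank2_matroid_bases_def matroid_bases_def by blast
  have nonempty: "\<B> \<noteq> {}"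
    using r unfolding rank2_matroid_bases_def matroid_bases_def by blast
  have allin: "\<exists>e. {b,e} \<in> \<B>" if b: "b < n" for b
  proof -
    obtain B0 where B0: "B0 \<in> \<B>" using nonempty by blast
    then obtain x y where xy: "B0 = {x,y}" using sub[OF B0] by (auto simp: card_2_iff)
    have x: "x < n" using sub[OF B0] xy by auto
    define g where "g = (b + (n - x)) mod n"
    have g: "g < n" using n2 by (simp add: g_def)
    have "(g + x) mod n = (b + (n - x) + x) mod n" by (simp add: g_def mod_add_left_eq)
    also have "b + (n - x) + x = b + n" using x by simp
    also have "(b + n) mod n = b" using b by simp
    finally have gx: "(g + x) mod n = b" .
    have "translate n g B0 \<in> \<B>" using inv g B0 unfolding translation_invariant_def by blast
    hence "{b, (g+y) mod n} \<in> \<B>" using gx by (simp add: xy tr_pair)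
    thus ?thesis by blast
  qed
  have trans: "{a,c} \<notin> \<B>" if h: "a < n" "b < n" "c < n" "{a,b} \<notin> \<B>" "{b,c} \<notin> \<B>"
    "a \<noteq> b" "b \<noteq> c" for a b c
  proof
    assume ac: "{a,c} \<in> \<B>"
    obtain e where e: "{b,e} \<in> \<B>" using allin h(2) by blast
    have "e \<noteq> a" using e h(4) by (metis insert_commute)
    moreover have "e \<noteq> c" using e h(5) by blast
    moreover have "b \<noteq> e" using sub[OF e] by (cases "b = e") auto
    ultimately have "e \<in> {b,e} - {a,c}" by auto
    then obtain y where y: "y \<in> {a,c} - {b,e}" "insert y ({b,e} - {e}) \<in> \<B>"
      using exch[OF e ac] by blast
    have "{b,e} - {e} = {b}" using \<open>b \<noteq> e\<close> by auto
    hence "{y,b} \<in> \<B>" using y by simp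
    moreover have "y = a \<or> y = c" using y by auto
    ultimately show False using h(4,5) by (metis insert_commute)
  qed
  define H where "H = {d. d < n \<and> (d = 0 \<or> {0,d} \<notin> \<B>)}"
  have closed: "(d1 + d2) mod n \<in> H" if d1: "d1 \<in> H" and d2: "d2 \<in> H" for d1 d2
  proof -
    define s where "s = (d1 + d2) mod n"
    have d1n: "d1 < n" and d2n: "d2 < n" using d1 d2 by (auto simp: H_def)
    have sn: "s < n" using n2 by (simp add: s_def)
    show ?thesis
    proof (cases "d2 = 0 \<or> d1 = 0 \<or> s = 0 \<or> s = d1")
      case True
      then consider "d2 = 0" | "d1 = 0" | "s = 0" | "s = d1" by blast
      thus ?thesis
      proof cases
        case 1 thus ?thesis using d1 d1n by (simp add: s_def)
      next
        case 2 thus ?thesis using d2 d2n by (simp add: s_def)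
      next
        case 3 thus ?thesis using sn by (simp add: H_def s_def)
      next
        case 4 thus ?thesis using d1 by (simp add: s_def)
      qed
    next
      case False
      have nb2: "{0,d2} \<notin> \<B>" using d2 False by (simp add: H_def)
      have nb1: "{0,d1} \<notin> \<B>" using d1 False by (simp add: H_def)
      have "translate n d1 {0,d2} = {d1, s}" using d1n by (simp add: tr_pair s_def)
      hence "{d1, s} \<notin> \<B>" using shift_iff[OF inv, of "{0,d2}" d1] d1n d2n nb2 by simp
      hence "{0,s} \<notin> \<B>" using trans[of 0 d1 s] nb1 d1n sn False by blast
      thus ?thesis using sn by (simp add: H_def s_def)
    qed
  qed
  have mult: "(k * d) mod n \<in> H" if d: "d \<in> H" for k d
  proof (induction k)
    case 0 thus ?case using n2 by (simp add: H_def)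
  next
    case (Suc k)
    have "(d + (k * d) mod n) mod n \<in> H" using closed[OF d Suc] .
    moreover have "(d + (k * d) mod n) mod n = (Suc k * d) mod n" by (simp add: mod_add_right_eq)
    ultimately show ?case by simp
  qed
  have H0: "d = 0" if d: "d \<in> H" for d
  proof (rule ccontr)
    assume d0: "d \<noteq> 0"
    have dn: "d < n" using d by (simp add: H_def)
    have "\<not> n dvd d" using d0 dn by (auto dest: dvd_imp_le)
    hence "coprime n d" using p by (simp add: prime_imp_coprime)
    hence g1: "gcd d n = 1" by (simp add: coprime_iff_gcd_eq_1 gcd.commute)
    obtain x y where xy: "d * x = n * y + 1" using bezout_nat[OF d0, of n] g1 by auto
    obtain e where e: "{0,e} \<in> \<B>" using allin n2 by fastforce
    have en: "e < n" using sub[OF e] by auto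
    have "(e * x * d) mod n = e"
    proof -
      have "e * x * d = e * (d * x)" by (simp add: algebra_simps)
      also have "\<dots> = e * (n * y + 1)" using xy by simp
      also have "\<dots> = e + (e * y) * n" by (simp add: algebra_simps)
      finally show ?thesis using en by simp
    qed
    hence "e \<in> H" using mult[OF d, of "e * x"] by simp
    moreover have "e \<noteq> 0" using sub[OF e] by (cases "e = 0") auto
    ultimately show False using e by (simp add: H_def)
  qed
  show ?thesis
  proof
    show "\<B> \<subseteq> uniform_2 n" using sub by (auto simp: uniform_2_def)
  next
    show "uniform_2 n \<subseteq> \<B>"
    proof
      fix B assume B: "B \<in> uniform_2 n"
      then obtain a b where ab: "B = {a,b}" "a \<noteq> b" by (auto simp: uniform_2_def card_2_iff)
      have an: "a < n" and bn: "b < n" using B ab by (auto simp: uniform_2_def)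
      define g where "g = (n - a) mod n"
      have g: "g < n" using n2 by (simp add: g_def)
      have ga: "(g + a) mod n = 0"
      proof -
        have "(g + a) mod n = (n - a + a) mod n" by (simp add: g_def mod_add_left_eq)
        thus ?thesis using an by simp
      qed
      define d where "d = (g + b) mod n"
      have d0: "d \<noteq> 0" using nz_arith[OF an bn ab(2)] by (simp add: d_def g_def)
      have dn: "d < n" using n2 by (simp add: d_def)
      have "d \<notin> H" using H0 d0 by blast
      hence "{0,d} \<in> \<B>" using dn by (simp add: H_def)
      moreover have "translate n g B = {0,d}" using ab ga by (simp add: tr_pair d_def)
      ultimately show "B \<in> \<B>" using shift_iff[OF inv, of B g] g B by (simp add: uniform_2_def)
    qed
  qed
qed

theorem mainTheorem6:
  fixes n :: nat
  assumes "n \<ge> 2"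
  shows "prime n \<longleftrightarrow>
    {\<B>. rank2_matroid_bases {0..<n} \<B> \<and> translation_invariant n \<B>} = {uniform_2 n}"
proof
  assume p: "prime n"
  have "rank2_matroid_bases {0..<n} (uniform_2 n) \<and> translation_invariant n (uniform_2 n)"
    using Cb_ok[of n n] assms by (simp add: uniform_Cb)
  thus "{\<B>. rank2_matroid_bases {0..<n} \<B> \<and> translation_invariant n \<B>} = {uniform_2 n}"
    using prime_unique[OF p] by blast
next
  assume eq: "{\<B>. rank2_matroid_bases {0..<n} \<B> \<and> translation_invariant n \<B>} = {uniform_2 n}"
  show "prime n"
  proof (rule ccontr)
    assume np: "\<not> prime n"
    obtain q where q: "q dvd n" "q \<noteq> 1" "q \<noteq> n" using np assms by (auto simp: prime_nat_iff)
    have q0: "q \<noteq> 0" using q assms by auto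
    have qn: "q < n" using q assms by (metis dvd_imp_le le_neq_implies_less not_numeral_le_zero not_gr0)
    have q2: "2 \<le> q" using q q0 by linarith
    have "Cb n q \<in> {\<B>. rank2_matroid_bases {0..<n} \<B> \<and> translation_invariant n \<B>}"
      using Cb_ok[OF q(1) q2] assms by simp
    hence ceq: "Cb n q = uniform_2 n" using eq by blast
    have "{0,q} \<in> uniform_2 n" using qn q0 by (simp add: uniform_2_def)
    moreover have "{0,q} \<notin> Cb n q" using q0 by (simp add: Cb_def)
    ultimately show False using ceq by simp
  qed
qed

end
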